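(* Let $\mathcal{X}$ be a finite set, let $P_X$ be a pmf on $\mathcal{X}$ with $P_X(x)>0$ for all $x$, and let $R_X\neq P_X$ be a pmf on $\mathcal{X}$. Write $R_X=P_X+J_X=P_X+\mathrm{diag}(\sqrt{P_X})K_X$, i.e. $J_X=R_X-P_X$ and $K_X(x)=J_X(x)/\sqrt{P_X(x)}$. Then $$D(R_X\|P_X)\ge \frac{\|K_X\|_2^2\,\|J_X\|_1}{2\max_{x\in\mathcal{X}}\left|\frac{J_X(x)}{P_X(x)}\right|}.$$
   Context: $D(R_X\|P_X)=\sum_x R_X(x)\log(R_X(x)/P_X(x))$ is the KL divergence (natural log). $\mathrm{diag}(\sqrt{P_X})$ is the diagonal matrix with entries $\sqrt{P_X(x)}$. $\|\cdot\|_p$ denotes the $\ell^p$-norm. *)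

theory Defs
  imports "HOL-Probability.Probability"
begin

definition KL_div :: "'a::finite pmf \<Rightarrow> 'a pmf \<Rightarrow> real" where
  "KL_div R P = (\<Sum>x\<in>UNIV. if pmf R x = 0 then 0 else pmf R x * ln (pmf R x / pmf P x))"

end

theory Submission
  imports Defs
begin

lemma kder: fixes x :: real assumes "x > 0" shows
 "((\<lambda>x. ln x - 3*(x-1)*(x+5)/(2*(x+2)^2)) has_real_derivative (1/x - 27/(x+2)^3)) (at x)"
proof -
  have "((\<lambda>x. ln x - 3*(x-1)*(x+5)/(2*(x+2)^2)) has_real_derivative
     (1/x - ((3*(x+5) + 3*(x-1)) * (2*(x+2)^2) - 3*(x-1)*(x+5)*(2*(2*(x+2))))/ (2*(x+2)^2)^2)) (at x)"
    using assms by (auto intro!: derivative_eq_intros simp: power2_eq_square)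
  moreover have "(1/x - ((3*(x+5) + 3*(x-1)) * (2*(x+2)^2) - 3*(x-1)*(x+5)*(2*(2*(x+2))))/ (2*(x+2)^2)^2)
     = 1/x - 27/(x+2)^3"
    using assms by (simp add: field_simps add_pos_pos) algebra
  ultimately show ?thesis by simp
qed

lemma kder_nonneg: fixes x :: real assumes "x > 0" shows "1/x - 27/(x+2)^3 \<ge> (0::real)"
proof -
  have "(x+2)^3 - 27*x = (x-1)^2*(x+8)" by algebra
  also have "\<dots> \<ge> 0" using assms by simp
  finally have "27*x \<le> (x+2)^3" by simp
  then have "27/(x+2)^3 \<le> 1/x" using assms by (simp add: field_simps)
  then show ?thesis by simp
qed

definition kf :: "real \<Rightarrow> real" where "kf x = ln x - 3*(x-1)*(x+5)/(2*(x+2)^2)"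

lemma kf_sign: fixes x :: real assumes "x > 0" shows "(x \<ge> 1 \<longrightarrow> kf x \<ge> 0) \<and> (x \<le> 1 \<longrightarrow> kf x \<le> 0)"
proof -
  have d: "\<And>y. y \<in> {a..b} \<Longrightarrow> a > 0 \<Longrightarrow> (kf has_real_derivative (1/y - 27/(y+2)^3)) (at y)" for a b
    unfolding kf_def[abs_def] by (rule kder) auto
  have k1: "kf 1 = 0" by (simp add: kf_def)
  show ?thesis
  proof (intro conjI impI)
    assume "x \<ge> 1"
    have "kf 1 \<le> kf x"
      by (rule deriv_nonneg_imp_mono[of 1 x kf "\<lambda>y. 1/y - 27/(y+2)^3"])
         (use d[of _ 1 x] kder_nonneg \<open>x \<ge> 1\<close> in auto)
    then show "kf x \<ge> 0" using k1 by simp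
  next
    assume "x \<le> 1"
    have "kf x \<le> kf 1"
      by (rule deriv_nonneg_imp_mono[of x 1 kf "\<lambda>y. 1/y - 27/(y+2)^3"])
         (use d[of _ x 1] kder_nonneg \<open>x \<le> 1\<close> assms in auto)
    then show "kf x \<le> 0" using k1 by simp
  qed
qed

lemma hder: fixes x :: real assumes "x > 0" shows
 "((\<lambda>x. x*ln x - x + 1 - 3*(x-1)^2/(2*(x+2))) has_real_derivative kf x) (at x)"
proof -
  have "((\<lambda>x. x*ln x - x + 1 - 3*(x-1)^2/(2*(x+2))) has_real_derivative
     (ln x + x * (1/x) - 1 - ((3*(2*(x-1))) * (2*(x+2)) - 3*(x-1)^2*2)/ (2*(x+2))^2)) (at x)"
    using assms by (auto intro!: derivative_eq_intros simp: power2_eq_square)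
  moreover have "(ln x + x * (1/x) - 1 - ((3*(2*(x-1))) * (2*(x+2)) - 3*(x-1)^2*2)/ (2*(x+2))^2) = kf x"
    using assms unfolding kf_def by (simp add: field_simps add_pos_pos) algebra
  ultimately show ?thesis by simp
qed

lemma bern: fixes x :: real assumes "x > 0" shows "x*ln x - x + 1 \<ge> 3*(x-1)^2/(2*(x+2))"
proof -
  define h where "h = (\<lambda>x::real. x*ln x - x + 1 - 3*(x-1)^2/(2*(x+2)))"
  have h1: "h 1 = 0" by (simp add: h_def)
  have d: "\<And>y. y > 0 \<Longrightarrow> (h has_real_derivative kf y) (at y)"
    unfolding h_def by (rule hder)
  have "h x \<ge> 0"
  proof (cases "x \<ge> 1")
    case True
    have "h 1 \<le> h x"
      by (rule deriv_nonneg_imp_mono[of 1 x h kf]) (use d kf_sign True in auto)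
    then show ?thesis using h1 by simp
  next
    case False
    have "h 1 \<le> h x"
      by (rule deriv_nonpos_imp_antimono[of x 1 h kf]) (use d kf_sign False assms in auto)
    then show ?thesis using h1 by simp
  qed
  then show ?thesis by (simp add: h_def)
qed

lemma perterm:
  fixes t M n l :: real
  assumes t1: "t \<ge> -1" and tM: "\<bar>t\<bar> \<le> M" and M: "M > 0" and n0: "0 \<le> n" and n1: "n \<le> 1/2"
    and bn: "3/(2*(3+M)) < n" and l: "l \<ge> 0"
  shows "3*t^2/(2*(3+t)) \<ge> n*t^2 + ((1-2*n)*l + l^2/2)*max (-t) 0
          - ((1/2-n)*l^2 + l^3/3)*(1 - max t 0/M) - (n - 3/(2*(3+M)))*M*max t 0"
proof (cases "t > 0")
  case True
  have g: "(1/2-n)*l^2 + l^3/3 \<ge> 0" using n1 l by simp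
  have "1 - t/M \<ge> 0" using tM M True by simp
  hence a: "((1/2-n)*l^2 + l^3/3)*(1 - max t 0/M) \<ge> 0" using g True by simp
  have b: "3/(2*(3+t)) \<ge> 3/(2*(3+M))" using True tM M by (simp add: frac_le)
  have c: "t^2 \<le> M*t" using True tM by (simp add: power2_eq_square)
  have "3*t^2/(2*(3+t)) = t^2 * (3/(2*(3+t)))" by simp
  also have "\<dots> \<ge> t^2 * (3/(2*(3+M)))" by (rule mult_left_mono) (use b in auto)
  finally have d: "3*t^2/(2*(3+t)) \<ge> n*t^2 - (n - 3/(2*(3+M)))*t^2" by (simp add: algebra_simps)
  have "(n - 3/(2*(3+M)))*t^2 \<le> (n - 3/(2*(3+M)))*(M*t)" using c bn by (simp add: mult_left_mono)
  then show ?thesis using d a True by (simp add: algebra_simps)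
next
  case False
  define u where "u = -t"
  have u0: "u \<ge> 0" and u1: "u \<le> 1" using False t1 by (auto simp: u_def)
  have t: "t = -u" by (simp add: u_def)
  have B: "3*t^2/(2*(3+t)) \<ge> u^2/2 + u^3/6"
  proof -
    have pos: "3 - u > 0" using u1 by simp
    have "(u^2/2 + u^3/6) * (2*(3-u)) = 3*u^2 - u^4/3" by algebra
    also have "\<dots> \<le> 3*u^2" by simp
    finally have "u^2/2 + u^3/6 \<le> 3*u^2/(2*(3-u))" using pos by (simp add: field_simps)
    then show ?thesis by (simp add: t)
  qed
  have sq: "u^2 \<ge> 2*l*u - l^2"
  proof -
    have "u^2 - (2*l*u - l^2) = (u-l)^2" by algebra
    then show ?thesis by (smt (verit) zero_le_power2)
  qed
  have cu: "u^3 \<ge> 3*l^2*u - 2*l^3"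
  proof -
    have "u^3 - (3*l^2*u - 2*l^3) = (u-l)^2*(u+2*l)" by algebra
    moreover have "(u-l)^2*(u+2*l) \<ge> 0" using u0 l by simp
    ultimately show ?thesis by simp
  qed
  have "(1/2-n)*u^2 \<ge> (1/2-n)*(2*l*u - l^2)" using sq n1 by (simp add: mult_left_mono)
  then have "u^2/2 + u^3/6 - n*u^2 \<ge> ((1-2*n)*l + l^2/2)*u - ((1/2-n)*l^2 + l^3/3)"
    using cu by (simp add: algebra_simps power2_eq_square power3_eq_cube)
  then show ?thesis using B False by (simp add: t max_def power2_eq_square)
qed

lemma scalar:
  fixes M n :: real
  assumes M: "M > 0" and n0: "0 < n" and n1: "n \<le> 1/2"
  defines "l \<equiv> M*n/(1-n)"
  shows "((1-2*n)*l + l^2/2)*(n*M) - ((1/2-n)*l^2 + l^3/3)*(1-n) - (n - 3/(2*(3+M)))*M*(n*M) \<ge> 0"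
proof -
  have q: "1 - n > 0" using n1 by simp
  define b where "b = 3/(2*(3+M))"
  have hl: "l*(1-n) = M*n" unfolding l_def using q by simp
  have hb: "b*(2*(3+M)) = 3" unfolding b_def using M by (simp add: field_simps)
  define X where "X = (1/2-n)*l + l^2/6 - (n-b)*M"
  have e1: "((1-2*n)*l + l^2/2)*(n*M) - ((1/2-n)*l^2 + l^3/3)*(1-n) - (n - b)*M*(n*M) = (n*M)*X"
    unfolding X_def using hl by algebra
  have e2: "6*(1-n)^2*(3+M)*X = M*((n*M - 3*(1-2*n)/2)^2 + 9*(1-2*n)*(3/4-n/2))"
    unfolding X_def using hl hb by algebra
  have "(n*M - 3*(1-2*n)/2)^2 + 9*(1-2*n)*(3/4-n/2) \<ge> 0"
    using n1 by (intro add_nonneg_nonneg) auto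
  hence "6*(1-n)^2*(3+M)*X \<ge> 0" using e2 M by simp
  moreover have "6*(1-n)^2*(3+M) > 0" using q M by simp
  ultimately have "X \<ge> 0" by (simp add: zero_le_mult_iff)
  hence "(n*M)*X \<ge> 0" using n0 M by simp
  then show ?thesis using e1 unfolding b_def by simp
qed

lemma core:
  fixes p t :: "'a::finite \<Rightarrow> real" and M :: real
  assumes p: "\<And>x. p x > 0" and s1: "(\<Sum>x\<in>UNIV. p x) = 1" and s0: "(\<Sum>x\<in>UNIV. p x * t x) = 0"
    and t1: "\<And>x. t x \<ge> -1" and tM: "\<And>x. \<bar>t x\<bar> \<le> M" and M: "M > 0"
  shows "(\<Sum>x\<in>UNIV. p x * (3*(t x)^2/(2*(3+t x)))) \<ge>
     (\<Sum>x\<in>UNIV. p x*(t x)^2)*(\<Sum>x\<in>UNIV. p x*\<bar>t x\<bar>)/(2*M)"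
proof -
  define S where "S = (\<Sum>x\<in>UNIV. p x*\<bar>t x\<bar>)"
  define Q where "Q = (\<Sum>x\<in>UNIV. p x*(t x)^2)"
  define n where "n = S/(2*M)"
  have "S \<le> (\<Sum>x\<in>UNIV. p x * M)" unfolding S_def
    by (rule sum_mono) (use p tM in \<open>auto intro: mult_left_mono less_imp_le\<close>)
  also have "\<dots> = M" using s1 by (simp add: sum_distrib_right[symmetric])
  finally have SM: "S \<le> M" .
  have S0: "S \<ge> 0" unfolding S_def by (rule sum_nonneg) (simp add: less_imp_le[OF p])
  have n0: "n \<ge> 0" and n1: "n \<le> 1/2" using SM S0 M by (auto simp: n_def field_simps)
  have rhs: "Q*S/(2*M) = (\<Sum>x\<in>UNIV. p x * (n * (t x)^2))"
    unfolding Q_def n_def by (simp add: sum_distrib_left sum_distrib_right sum_divide_distrib algebra_simps)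
  have goal: "(\<Sum>x\<in>UNIV. p x * (n * (t x)^2)) \<le> (\<Sum>x\<in>UNIV. p x * (3*(t x)^2/(2*(3+t x))))"
  proof (cases "n \<le> 3/(2*(3+M))")
    case True
    show ?thesis
    proof (rule sum_mono)
      fix x
      have pos: "3 + t x > 0" using t1[of x] by simp
      have "n \<le> 3/(2*(3+t x))"
      proof (cases "t x > 0")
        case True
        have "3/(2*(3+M)) \<le> 3/(2*(3+t x))" using True tM[of x] M by (simp add: frac_le)
        then show ?thesis using \<open>n \<le> 3/(2*(3+M))\<close> by simp
      next
        case False
        have "1/2 \<le> 3/(2*(3+t x))" using False pos by (simp add: field_simps)
        then show ?thesis using n1 by simp
      qed
      hence "n * (t x)^2 \<le> 3/(2*(3+t x)) * (t x)^2" by (rule mult_right_mono) simp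
      hence "n * (t x)^2 \<le> 3*(t x)^2/(2*(3+t x))" by simp
      then show "p x * (n * (t x)^2) \<le> p x * (3*(t x)^2/(2*(3+t x)))"
        by (rule mult_left_mono) (use p[of x] in auto)
    qed
  next
    case False
    hence bn: "3/(2*(3+M)) < n" by simp
    have npos: "n > 0" using bn M by (smt (verit) divide_pos_pos)
    define l where "l = M*n/(1-n)"
    have l0: "l \<ge> 0" unfolding l_def using M n0 n1 by simp
    define al where "al = (1-2*n)*l + l^2/2"
    define ga where "ga = (1/2-n)*l^2 + l^3/3"
    define c where "c = (n - 3/(2*(3+M)))*M"
    have pt: "\<And>x. p x * (n*(t x)^2 + al*max (-t x) 0 - ga*(1 - max (t x) 0/M) - c*max (t x) 0)
        \<le> p x * (3*(t x)^2/(2*(3+t x)))"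
    proof -
      fix x
      have "n*(t x)^2 + al*max (-t x) 0 - ga*(1 - max (t x) 0/M) - c*max (t x) 0 \<le> 3*(t x)^2/(2*(3+t x))"
        unfolding al_def ga_def c_def
        using perterm[OF t1[of x] tM[of x] M n0 n1 bn l0] by (simp add: algebra_simps)
      then show "p x * (n*(t x)^2 + al*max (-t x) 0 - ga*(1 - max (t x) 0/M) - c*max (t x) 0)
        \<le> p x * (3*(t x)^2/(2*(3+t x)))" by (rule mult_left_mono) (use p[of x] in auto)
    qed
    have mp: "(\<Sum>x\<in>UNIV. p x * max (t x) 0) = n*M"
    proof -
      have "(\<Sum>x\<in>UNIV. p x * max (t x) 0) = (\<Sum>x\<in>UNIV. (p x * t x + p x * \<bar>t x\<bar>)/2)"
        by (rule sum.cong) (auto simp: max_def)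
      also have "\<dots> = (0 + S)/2" unfolding S_def using s0
        by (simp add: sum_divide_distrib[symmetric] sum.distrib)
      finally show ?thesis using M by (simp add: n_def)
    qed
    have mm: "(\<Sum>x\<in>UNIV. p x * max (- t x) 0) = n*M"
    proof -
      have "(\<Sum>x\<in>UNIV. p x * max (- t x) 0) = (\<Sum>x\<in>UNIV. (p x * \<bar>t x\<bar> - p x * t x)/2)"
        by (rule sum.cong) (auto simp: max_def)
      also have "\<dots> = (S - 0)/2" unfolding S_def using s0
        by (simp add: sum_divide_distrib[symmetric] sum_subtractf)
      finally show ?thesis using M by (simp add: n_def)
    qed
    have expand: "(\<Sum>x\<in>UNIV. p x * (n*(t x)^2 + al*max (-t x) 0 - ga*(1 - max (t x) 0/M) - c*max (t x) 0))
      = (\<Sum>x\<in>UNIV. p x * (n * (t x)^2)) + al*(\<Sum>x\<in>UNIV. p x * max (- t x) 0) - ga*(\<Sum>x\<in>UNIV. p x)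
        + (ga/M)*(\<Sum>x\<in>UNIV. p x * max (t x) 0) - c*(\<Sum>x\<in>UNIV. p x * max (t x) 0)"
    proof -
      have "\<And>x. p x * (n*(t x)^2 + al*max (-t x) 0 - ga*(1 - max (t x) 0/M) - c*max (t x) 0)
        = p x * (n * (t x)^2) + al*(p x * max (- t x) 0) - ga*p x + (ga/M)*(p x * max (t x) 0) - c*(p x * max (t x) 0)"
        by (simp add: algebra_simps)
      then show ?thesis
        by (simp add: sum.distrib sum_subtractf sum_distrib_left)
    qed
    have sc: "al*(n*M) - ga*(1-n) - c*(n*M) \<ge> 0"
      unfolding al_def ga_def c_def l_def using scalar[OF M npos n1] by (simp add: algebra_simps)
    have "(\<Sum>x\<in>UNIV. p x * (n * (t x)^2)) \<le>
       (\<Sum>x\<in>UNIV. p x * (n*(t x)^2 + al*max (-t x) 0 - ga*(1 - max (t x) 0/M) - c*max (t x) 0))"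
      unfolding expand mp mm s1 using sc M by (simp add: field_simps)
    also have "\<dots> \<le> (\<Sum>x\<in>UNIV. p x * (3*(t x)^2/(2*(3+t x))))"
      by (rule sum_mono) (rule pt)
    finally show ?thesis .
  qed
  show ?thesis using goal rhs unfolding Q_def S_def by simp
qed


theorem lemma1:
  fixes P R :: "'a::finite pmf"
  assumes "\<And>x. pmf P x > 0"
    and "R \<noteq> P"
  defines "J \<equiv> (\<lambda>x. pmf R x - pmf P x)"
    and "K \<equiv> (\<lambda>x. (pmf R x - pmf P x) / sqrt (pmf P x))"
  shows "KL_div R P \<ge>
    ((\<Sum>x\<in>UNIV. (K x)\<^sup>2) * (\<Sum>x\<in>UNIV. \<bar>J x\<bar>)) /
      (2 * (MAX x\<in>UNIV. \<bar>J x / pmf P x\<bar>))"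
proof -
  note p = assms(1)
  define t where "t = (\<lambda>x. J x / pmf P x)"
  define M where "M = (MAX x\<in>UNIV. \<bar>J x / pmf P x\<bar>)"
  have sP: "(\<Sum>x\<in>UNIV. pmf P x) = 1" by (rule sum_pmf_eq_1) auto
  have sR: "(\<Sum>x\<in>UNIV. pmf R x) = 1" by (rule sum_pmf_eq_1) auto
  have pt: "\<And>x. pmf P x * t x = J x" using p unfolding t_def by (simp add: field_simps less_imp_neq[symmetric])
  have sJ: "(\<Sum>x\<in>UNIV. J x) = 0" unfolding J_def using sP sR by (simp add: sum_subtractf)
  have s0: "(\<Sum>x\<in>UNIV. pmf P x * t x) = 0" using sJ pt by simp
  have t1: "\<And>x. t x \<ge> -1"
  proof -
    fix x
    have "J x \<ge> - pmf P x" unfolding J_def by simp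
    then show "t x \<ge> -1" unfolding t_def using p[of x] by (simp add: field_simps)
  qed
  have tM: "\<And>x. \<bar>t x\<bar> \<le> M" unfolding M_def t_def by (rule Max_ge) auto
  obtain x0 where x0: "pmf R x0 \<noteq> pmf P x0" using assms(2) pmf_eq_iff by metis
  have "\<bar>t x0\<bar> > 0" unfolding t_def J_def using x0 p[of x0] by simp
  hence M0: "M > 0" using tM[of x0] by simp
  have C: "(\<Sum>x\<in>UNIV. pmf P x * (3*(t x)^2/(2*(3+t x)))) \<ge>
     (\<Sum>x\<in>UNIV. pmf P x*(t x)^2)*(\<Sum>x\<in>UNIV. pmf P x*\<bar>t x\<bar>)/(2*M)"
    by (rule core[where p="pmf P" and t=t and M=M, OF p sP s0 t1 tM M0])
  have K2: "\<And>x. (K x)^2 = pmf P x*(t x)^2"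
    using p unfolding K_def t_def J_def
    by (simp add: power_divide less_imp_le power2_eq_square field_simps less_imp_neq[symmetric])
  have Ja: "\<And>x. \<bar>J x\<bar> = pmf P x*\<bar>t x\<bar>"
    using pt p by (metis abs_mult abs_of_pos)
  have KLt: "\<And>x. (if pmf R x = 0 then 0 else pmf R x * ln (pmf R x / pmf P x)) - J x
       \<ge> pmf P x * (3*(t x)^2/(2*(3+t x)))"
  proof -
    fix x
    have px: "pmf P x > 0" by (rule p)
    show "?thesis x"
    proof (cases "pmf R x = 0")
      case True
      have "t x = -1" unfolding t_def J_def using True px by simp
      then show ?thesis using True px by (simp add: J_def)
    next
      case False
      define y where "y = pmf R x / pmf P x"
      have y0: "y > 0" unfolding y_def using False px by (simp add: pmf_nonneg order_le_neq_trans)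
      have ty: "t x = y - 1" unfolding t_def J_def y_def using px by (simp add: field_simps)
      have R: "pmf R x = pmf P x * y" unfolding y_def using px by simp
      have e1: "pmf R x * ln (pmf R x / pmf P x) = pmf R x * ln y" by (simp add: y_def)
      have e2: "J x = pmf P x * (y - 1)" unfolding J_def R by (simp add: algebra_simps)
      have "pmf R x * ln (pmf R x / pmf P x) - J x = pmf P x * (y * ln y - y + 1)"
        unfolding e1 e2 R by (simp add: algebra_simps)
      also have "\<dots> \<ge> pmf P x * (3*(y-1)^2/(2*(y+2)))"
        by (rule mult_left_mono[OF bern[OF y0]]) (use px in simp)
      finally show ?thesis using False ty by (simp add: add.commute)
    qed
  qed
  have "KL_div R P = (\<Sum>x\<in>UNIV. (if pmf R x = 0 then 0 else pmf R x * ln (pmf R x / pmf P x)) - J x)"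
    unfolding KL_div_def using sJ by (simp add: sum_subtractf)
  also have "\<dots> \<ge> (\<Sum>x\<in>UNIV. pmf P x * (3*(t x)^2/(2*(3+t x))))"
    by (rule sum_mono) (rule KLt)
  finally have "KL_div R P \<ge> (\<Sum>x\<in>UNIV. pmf P x*(t x)^2)*(\<Sum>x\<in>UNIV. pmf P x*\<bar>t x\<bar>)/(2*M)"
    using C by linarith
  then show ?thesis unfolding M_def[symmetric] K2 Ja .
qed

end
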